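(* Let $S$ be a semiring and let $\mathcal{A}=(A,X,Y,\sigma^A,\mu^A)$ be a sequential weighted automaton over $S$. Then there exists a Moore-type weighted automaton $\mathcal{B}=(B,X,Y,\sigma^B,\delta^B,\omega^B)$ over $S$ such that $[\![\mathcal{A}]\!]=[\![\mathcal{B}]\!]_{1n}$. Moreover, $\mathcal{B}$ can be chosen with $|B|\le |A|\cdot|Y|$.
   Context: A semiring $(S,+,\cdot,0,1)$ is a set with $(S,+,0)$ a commutative monoid, $(S,\cdot,1)$ a monoid (not necessarily commutative), $\cdot$ distributing over $+$ on both sides, and $0\cdot s=s\cdot 0=0$. $(X\times Y)^*$ is identified with the set of pairs $(u,v)\in X^*\times Y^*$ with $|u|=|v|$; its empty element is $(\varepsilon,\varepsilon)$. All automata have finite nonempty state set and finite nonempty alphabets $X,Y$. A sequential weighted automaton over $S$ is $\mathcal{A}=(A,X,Y,\sigma,\mu)$ with $\sigma:A\to S$ and $\mu:A\times X\times Y\times A\to S$. Its behavior $[\![\mathcal{A}]\!]:(X\times Y)^*\to S$ is $[\![\mathcal{A}]\!](\varepsilon,\varepsilon)=\sum_{a\in A}\sigma(a)$ and, for $u=x_1\cdots x_n$, $v=y_1\cdots y_n$ ($n\ge1$), $[\![\mathcal{A}]\!](u,v)=\sum_{(a_0,\dots,a_n)\in A^{n+1}}\sigma(a_0)\cdot\mu(a_0,x_1,y_1,a_1)\cdots\mu(a_{n-1},x_n,y_n,a_n)$. A Moore-type weighted automaton over $S$ is $\mathcal{B}=(B,X,Y,\sigma,\delta,\omega)$ with $\sigma:B\to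 S$, $\delta:B\times X\times B\to S$, $\omega:B\times Y\to S$; write $\delta_x(b,c)=\delta(b,x,c)$, $\omega_y(b)=\omega(b,y)$. Its $1n$-behavior is $[\![\mathcal{B}]\!]_{1n}(\varepsilon,\varepsilon)=\sum_{b\in B}\sigma(b)$ and, for $u=x_1\cdots x_n$, $v=y_1\cdots y_n$ with $n\ge1$, $[\![\mathcal{B}]\!]_{1n}(u,v)=\sum_{(b_0,\dots,b_n)\in B^{n+1}}\sigma(b_0)\cdot\delta_{x_1}(b_0,b_1)\cdot\omega_{y_1}(b_1)\cdots\delta_{x_n}(b_{n-1},b_n)\cdot\omega_{y_n}(b_n)$. *)

theory Defs
  imports Main
begin

text \<open>A semiring in the sense of the paper: commutative additive monoid, multiplicative
monoid (not necessarily commutative), two-sided distributivity, 0 annihilating.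
In Isabelle this is the class combination semiring_0 + monoid_mult (no 0 \<noteq> 1 required).\<close>

definition state_seqs :: "'q set \<Rightarrow> nat \<Rightarrow> 'q list set" where
  "state_seqs Q n = {qs. set qs \<subseteq> Q \<and> length qs = Suc n}"

definition seq_behavior ::
  "'a set \<Rightarrow> ('a \<Rightarrow> 's::{semiring_0,monoid_mult}) \<Rightarrow> ('a \<Rightarrow> 'x \<Rightarrow> 'y \<Rightarrow> 'a \<Rightarrow> 's)
    \<Rightarrow> 'x list \<Rightarrow> 'y list \<Rightarrow> 's" where
  "seq_behavior A \<sigma> \<mu> u v =
     (\<Sum>as\<in>state_seqs A (length u).
        \<sigma> (as ! 0) * prod_list (map (\<lambda>i. \<mu> (as ! i) (u ! i) (v ! i) (as ! Suc i)) [0..<length u]))"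

definition moore_behavior_1n ::
  "'b set \<Rightarrow> ('b \<Rightarrow> 's::{semiring_0,monoid_mult}) \<Rightarrow> ('b \<Rightarrow> 'x \<Rightarrow> 'b \<Rightarrow> 's) \<Rightarrow> ('b \<Rightarrow> 'y \<Rightarrow> 's)
    \<Rightarrow> 'x list \<Rightarrow> 'y list \<Rightarrow> 's" where
  "moore_behavior_1n B \<sigma> \<delta> \<omega> u v =
     (\<Sum>bs\<in>state_seqs B (length u).
        \<sigma> (bs ! 0) * prod_list (map (\<lambda>i. \<delta> (bs ! i) (u ! i) (bs ! Suc i) * \<omega> (bs ! Suc i) (v ! i))
                                     [0..<length u]))"

end

theory Submission
  imports Defs
begin

lemma prod_list_zero_mem:
  fixes xs :: "'s::{semiring_0,monoid_mult} list"
  shows "0 \<in> set xs \<Longrightarrow> prod_list xs = 0"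
  by (induction xs) auto

theorem theorem3:
  fixes A :: "'a set" and X :: "'x set" and Y :: "'y set"
    and \<sigma>A :: "'a \<Rightarrow> 's::{semiring_0,monoid_mult}"
    and \<mu>A :: "'a \<Rightarrow> 'x \<Rightarrow> 'y \<Rightarrow> 'a \<Rightarrow> 's"
  assumes "finite A" "A \<noteq> {}" "finite X" "X \<noteq> {}" "finite Y" "Y \<noteq> {}"
  shows "\<exists>(B :: ('a \<times> 'y) set) \<sigma>B \<delta>B \<omega>B.
           finite B \<and> B \<noteq> {} \<and> card B \<le> card A * card Y \<and>
           (\<forall>u v. set u \<subseteq> X \<longrightarrow> set v \<subseteq> Y \<longrightarrow> length u = length v \<longrightarrow>
              seq_behavior A \<sigma>A \<mu>A u v = moore_behavior_1n B \<sigma>B \<delta>B \<omega>B u v)"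
proof -
  obtain y0 where y0: "y0 \<in> Y" using assms(6) by blast
  define B where "B = A \<times> Y"
  define \<sigma>B where "\<sigma>B = (\<lambda>(a::'a, y::'y). if y = y0 then \<sigma>A a else 0)"
  define \<delta>B where "\<delta>B = (\<lambda>(b::'a\<times>'y) (x::'x) (b'::'a\<times>'y). \<mu>A (fst b) x (snd b') (fst b'))"
  define \<omega>B where "\<omega>B = (\<lambda>(b'::'a\<times>'y) (y::'y). if y = snd b' then (1::'s) else 0)"
  have fB: "finite B" using assms B_def by auto
  have main: "seq_behavior A \<sigma>A \<mu>A u v = moore_behavior_1n B \<sigma>B \<delta>B \<omega>B u v"
    if u: "set u \<subseteq> X" and v: "set v \<subseteq> Y" and len: "length u = length v" for u v
  proof -
    let ?n = "length u"
    define g where "g = (\<lambda>bs. \<sigma>B (bs ! 0) * prod_list (map (\<lambda>i. \<delta>B (bs ! i) (u ! i) (bs ! Suc i) * \<omega>B (bs ! Suc i) (v ! i))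
                                     [0..<?n]))"
    define T where "T = {bs \<in> state_seqs B ?n. map snd bs = y0 # v}"
    have finS: "finite (state_seqs B ?n)"
      unfolding state_seqs_def using finite_lists_length_eq[OF fB] by simp
    have zero: "g bs = 0" if bs: "bs \<in> state_seqs B ?n - T" for bs
    proof -
      from bs have lb: "length bs = Suc ?n" and nt: "map snd bs \<noteq> y0 # v"
        unfolding T_def state_seqs_def by auto
      show ?thesis
      proof (cases "snd (bs ! 0) = y0")
        case False
        then show ?thesis unfolding g_def \<sigma>B_def by (simp add: case_prod_beta)
      next
        case True
        have "\<exists>i<?n. snd (bs ! Suc i) \<noteq> v ! i"
        proof (rule ccontr)
          assume "\<not> ?thesis"
          hence h: "\<forall>i<?n. snd (bs ! Suc i) = v ! i" by auto
          have "map snd bs = y0 # v"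
          proof (rule nth_equalityI)
            show "length (map snd bs) = length (y0 # v)" using lb len by simp
            fix i assume "i < length (map snd bs)"
            then show "map snd bs ! i = (y0 # v) ! i"
              using h True lb by (cases i) auto
          qed
          with nt show False by simp
        qed
        then obtain i where i: "i < ?n" "snd (bs ! Suc i) \<noteq> v ! i" by blast
        have "0 \<in> set (map (\<lambda>i. \<delta>B (bs ! i) (u ! i) (bs ! Suc i) * \<omega>B (bs ! Suc i) (v ! i)) [0..<?n])"
          using i by (force simp: \<omega>B_def)
        then show ?thesis unfolding g_def using prod_list_zero_mem by (metis mult_zero_right)
      qed
    qed
    have "moore_behavior_1n B \<sigma>B \<delta>B \<omega>B u v = sum g (state_seqs B ?n)"
      unfolding moore_behavior_1n_def g_def by simp
    also have "\<dots> = sum g T"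
      by (rule sum.mono_neutral_right[OF finS]) (auto simp: T_def zero)
    also have "\<dots> = sum (\<lambda>as. g (zip as (y0 # v))) (state_seqs A ?n)"
    proof (rule sum.reindex_bij_betw[symmetric])
      show "bij_betw (\<lambda>as. zip as (y0 # v)) (state_seqs A ?n) T"
      proof (rule bij_betw_byWitness[where f'="map fst"])
        show "\<forall>a\<in>state_seqs A ?n. map fst (zip a (y0 # v)) = a"
          using len by (auto simp: state_seqs_def)
        show "\<forall>a'\<in>T. zip (map fst a') (y0 # v) = a'"
          unfolding T_def by (metis (mono_tags, lifting) mem_Collect_eq zip_map_fst_snd)
        show "(\<lambda>as. zip as (y0 # v)) ` state_seqs A ?n \<subseteq> T"
        proof
          fix bs assume "bs \<in> (\<lambda>as. zip as (y0 # v)) ` state_seqs A ?n"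
          then obtain as where as: "as \<in> state_seqs A ?n" "bs = zip as (y0 # v)" by blast
          have "set bs \<subseteq> A \<times> Y"
          proof
            fix p assume "p \<in> set bs"
            then have "fst p \<in> set as" "snd p \<in> set (y0 # v)" using as(2)
              by (metis prod.collapse set_zip_leftD, metis prod.collapse set_zip_rightD)
            then show "p \<in> A \<times> Y" using as(1) v y0 by (auto simp: state_seqs_def mem_Times_iff)
          qed
          then show "bs \<in> T" using as len by (auto simp: T_def state_seqs_def B_def)
        qed
        show "map fst ` T \<subseteq> state_seqs A ?n"
          by (auto simp: T_def state_seqs_def B_def) (auto simp: mem_Times_iff subset_iff)
      qed
    qed
    also have "\<dots> = seq_behavior A \<sigma>A \<mu>A u v"
      unfolding seq_behavior_def
    proof (rule sum.cong[OF refl])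
      fix as assume "as \<in> state_seqs A ?n"
      hence la: "length as = Suc ?n" by (simp add: state_seqs_def)
      have e: "map (\<lambda>i. \<delta>B (zip as (y0 # v) ! i) (u ! i) (zip as (y0 # v) ! Suc i) *
                     \<omega>B (zip as (y0 # v) ! Suc i) (v ! i)) [0..<?n]
             = map (\<lambda>i. \<mu>A (as ! i) (u ! i) (v ! i) (as ! Suc i)) [0..<?n]"
        using la len by (auto simp: \<delta>B_def \<omega>B_def)
      show "g (zip as (y0 # v)) = \<sigma>A (as ! 0) * prod_list (map (\<lambda>i. \<mu>A (as ! i) (u ! i) (v ! i) (as ! Suc i)) [0..<?n])"
        unfolding g_def e using la by (simp add: \<sigma>B_def)
    qed
    finally show ?thesis by simp
  qed
  show ?thesis
    apply (rule exI[of _ B], rule exI[of _ \<sigma>B], rule exI[of _ \<delta>B], rule exI[of _ \<omega>B])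
    using fB assms main by (auto simp: B_def card_cartesian_product)
qed

end
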